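(* Let $\mathcal{G}\subseteq C(\mathbb{R},\mathbb{R})$ be nonempty. The following conditions are equivalent: (1) $\{\mathrm{CL}(E):E\in\mathrm{CL}(\mathbb{R})\}\subseteq\mathcal{K}_\mathcal{G}$; (2) the least element of $(\mathcal{K}_\mathcal{G},\subseteq)$ is $\{\emptyset\}$; (3) for each $x\in\mathbb{R}$, $\mathcal{G}[x]\neq\mathbb{R}$.
   Context: For a closed set $E\subseteq\mathbb{R}$, $\mathrm{CL}(E)$ denotes the family of all closed subsets of $E$; $C(\mathbb{R},\mathbb{R})$ is the set of continuous functions $\mathbb{R}\to\mathbb{R}$. For $\mathcal{G}\subseteq C(\mathbb{R},\mathbb{R})$ and $x\in\mathbb{R}$, $\mathcal{G}[x]=\{g(x):g\in\mathcal{G}\}$. Let $R_\mathcal{G}=\{(f,E)\in C(\mathbb{R},\mathbb{R})\times\mathrm{CL}(\mathbb{R}):(\exists g\in\mathcal{G})\, f\restriction E=g\restriction E\}$; for $\mathcal{F}\subseteq C(\mathbb{R},\mathbb{R})$ put $E_\mathcal{G}(\mathcal{F})=\{E\in\mathrm{CL}(\mathbb{R}):(\forall f\in\mathcal{F})\,(f,E)\in R_\mathcal{G}\}$, and let $\mathcal{K}_\mathcal{G}=\{E_\mathcal{G}(\mathcal{F}):\mathcal{F}\subseteq C(\mathbb{R},\mathbb{R})\}$, ordered by inclusion (a complete lattice). *)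

theory Defs
  imports "HOL-Analysis.Analysis"
begin

definition Ccont :: "(real \<Rightarrow> real) set" where
  "Ccont = {f. continuous_on UNIV f}"

definition CL :: "real set \<Rightarrow> real set set" where
  "CL E = {F. closed F \<and> F \<subseteq> E}"

definition R_rel :: "(real \<Rightarrow> real) set \<Rightarrow> ((real \<Rightarrow> real) \<times> real set) set" where
  "R_rel G = {(f, E). f \<in> Ccont \<and> E \<in> CL UNIV \<and> (\<exists>g\<in>G. \<forall>x\<in>E. f x = g x)}"

definition E_G :: "(real \<Rightarrow> real) set \<Rightarrow> (real \<Rightarrow> real) set \<Rightarrow> real set set" where
  "E_G G F = {E \<in> CL UNIV. \<forall>f\<in>F. (f, E) \<in> R_rel G}"

definition K_G :: "(real \<Rightarrow> real) set \<Rightarrow> real set set set" where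
  "K_G G = {E_G G F | F. F \<subseteq> Ccont}"

definition is_least_in :: "'a set set \<Rightarrow> 'a set \<Rightarrow> bool" where
  "is_least_in K A \<longleftrightarrow> A \<in> K \<and> (\<forall>B\<in>K. A \<subseteq> B)"

end

theory Submission
  imports Defs
begin

lemma emp_in_EG:
  assumes "G \<noteq> {}" "F \<subseteq> Ccont"
  shows "{} \<in> E_G G F"
  using assms unfolding E_G_def R_rel_def CL_def by auto

lemma key31:
  fixes G :: "(real \<Rightarrow> real) set"
  assumes GC: "G \<subseteq> Ccont" and G0: "g0 \<in> G"
    and nc: "\<forall>x::real. (\<lambda>g. g x) ` G \<noteq> UNIV" and cE: "closed E"
  shows "CL E \<in> K_G G"
proof -
  define c where "c x = (SOME v. v \<notin> (\<lambda>g. g x) ` G)" for x :: real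
  have c: "c x \<notin> (\<lambda>g. g x) ` G" for x
  proof -
    have "\<exists>v. v \<notin> (\<lambda>g. g x) ` G" using nc[rule_format, of x] by auto
    then show ?thesis unfolding c_def by (rule someI_ex)
  qed
  define F where "F = {f. \<exists>x. x \<notin> E \<and> continuous_on UNIV f \<and> f x = c x \<and> (\<forall>y\<in>E. f y = g0 y)}"
  have FC: "F \<subseteq> Ccont" unfolding F_def Ccont_def by auto
  have g0c: "continuous_on UNIV g0" using GC G0 unfolding Ccont_def by auto
  have ex: "\<exists>f\<in>F. f x = c x" if "x \<notin> E" for x
  proof -
    have disj: "E \<inter> {x} = {}" using that by auto
    obtain h :: "real \<Rightarrow> real" where h: "continuous_on UNIV h"
      "\<And>y. y \<in> E \<Longrightarrow> h y = 0" "\<And>y. y \<in> {x} \<Longrightarrow> h y = c x - g0 x"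
      apply (rule Urysohn[OF cE closed_singleton, of x 0 "c x - g0 x"])
      using disj apply simp
      by auto
    have "(\<lambda>y. g0 y + h y) \<in> F" unfolding F_def
      using that h g0c by (auto intro!: continuous_on_add)
    moreover have "g0 x + h x = c x" using h(3)[of x] by simp
    ultimately show ?thesis by (intro bexI[of _ "\<lambda>y. g0 y + h y"]) simp_all
  qed
  have "E_G G F = CL E"
  proof
    show "CL E \<subseteq> E_G G F"
    proof
      fix D assume D: "D \<in> CL E"
      have cD: "closed D" "D \<subseteq> E" using D unfolding CL_def by auto
      have "\<forall>f\<in>F. (f, D) \<in> R_rel G"
      proof
        fix f assume f: "f \<in> F"
        have "f \<in> Ccont" using f FC by blast
        moreover have "\<forall>y\<in>D. f y = g0 y" using f cD(2) unfolding F_def by blast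
        ultimately show "(f, D) \<in> R_rel G" unfolding R_rel_def CL_def using cD(1) G0 by blast
      qed
      then show "D \<in> E_G G F" unfolding E_G_def CL_def using cD(1) by blast
    qed
  next
    show "E_G G F \<subseteq> CL E"
    proof
      fix D assume D: "D \<in> E_G G F"
      have cD: "closed D" using D unfolding E_G_def CL_def by blast
      have "D \<subseteq> E"
      proof
        fix x assume xD: "x \<in> D"
        show "x \<in> E"
        proof (rule ccontr)
          assume "x \<notin> E"
          then obtain f where f: "f \<in> F" "f x = c x" using ex by blast
          then have "(f, D) \<in> R_rel G" using D unfolding E_G_def by blast
          then obtain g where "g \<in> G" "\<forall>y\<in>D. f y = g y" unfolding R_rel_def by blast
          then have "c x = g x" using xD f by simp
          then have "c x \<in> (\<lambda>g. g x) ` G" using \<open>g \<in> G\<close> by (rule image_eqI)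
          then show False using c by blast
        qed
      qed
      then show "D \<in> CL E" using cD unfolding CL_def by auto
    qed
  qed
  then show ?thesis unfolding K_G_def using FC by blast
qed

theorem theorem3p2:
  fixes G :: "(real \<Rightarrow> real) set"
  assumes "G \<subseteq> Ccont" and "G \<noteq> {}"
  shows "({CL E | E. E \<in> CL UNIV} \<subseteq> K_G G \<longleftrightarrow> is_least_in (K_G G) {{}})
       \<and> (is_least_in (K_G G) {{}} \<longleftrightarrow> (\<forall>x::real. (\<lambda>g. g x) ` G \<noteq> UNIV))"
proof -
  obtain g0 where g0: "g0 \<in> G" using assms(2) by blast
  have least: "is_least_in (K_G G) {{}}" if "{{}} \<in> K_G G"
    unfolding is_least_in_def using that emp_in_EG[OF assms(2)] unfolding K_G_def by blast
  have i12: "is_least_in (K_G G) {{}}" if "{CL E | E. E \<in> CL UNIV} \<subseteq> K_G G"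
  proof -
    have "CL {} = {{}}" unfolding CL_def by auto
    moreover have "{} \<in> CL UNIV" unfolding CL_def by auto
    ultimately show ?thesis using that least by blast
  qed
  have i23: "\<forall>x::real. (\<lambda>g. g x) ` G \<noteq> UNIV" if "is_least_in (K_G G) {{}}"
  proof (rule ccontr)
    assume "\<not> ?thesis"
    then obtain x where x: "(\<lambda>g. g x) ` G = UNIV" by blast
    have "{{}} \<in> K_G G" using that unfolding is_least_in_def by simp
    then obtain F where F: "F \<subseteq> Ccont" "{{}} = E_G G F"
      unfolding K_G_def by auto
    have allv: "\<forall>v. \<exists>g\<in>G. v = g x" using x by (metis UNIV_I imageE)
    have "{x} \<in> E_G G F"
      unfolding E_G_def R_rel_def CL_def using F(1) allv by auto
    then show False using F by auto
  qed
  have i31: "{CL E | E. E \<in> CL UNIV} \<subseteq> K_G G" if "\<forall>x::real. (\<lambda>g. g x) ` G \<noteq> UNIV"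
    using key31[OF assms(1) g0 that] unfolding CL_def by auto
  show ?thesis using i12 i23 i31 by blast
qed

end
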